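(* Fix $C>0$ and $Q\in\mathbb{N}$. Let $L\in\{\mathrm{OR},\mathrm{SUM},\mathrm{OR2},\mathrm{SUM2}\}$ and let $\{\mathcal{L}_n\}$ be a family in which each $\mathcal{L}_n$ is a strip pattern set of width $C$ and density $Q$ on the $n\times n$ image $I_n$, such that $|\mathcal{L}_n|=\Theta(n^2)$ and $V(\mathcal{L}_n)=\Omega(n^3)$. Then $L(\mathcal{L}_n)=\Omega(n^2\log n)$.
   Context: Image: the $n\times n$ image $I_n$ is the set of $n^2$ pixel variables $p_{ij}$, $i,j=0,\dots,n-1$; pixel $p_{ij}$ is identified with the integer point $(i,j)\in\mathbb{R}^2$. A pattern is a nonempty subset of the image; a pattern set $\mathcal{T}=\{T_k\}_{k=1}^m$ is a nonempty set of $m$ distinct patterns, and its volume is $V(\mathcal{T})=\sum_{T\in\mathcal{T}}|T|$. Computing $\mathcal{T}$ means computing simultaneously $y_k=\sum_{p\in T_k}p$, $k=1,\dots,m$, where "sum" is a commutative semigroup operation on pixel values. Circuits: a circuit is a directed acyclic graph with one input node of fanin zero per pixel and $m$ output nodes $y_k$ of fanout zero; every node of nonzero fanin (a gate) may have any positive number of incoming edges and computes the semigroup sum of its in-neighbours' values. The size of a circuit is its number of edges. A circuit computes $\mathcal{T}$ if for every input assignment each $y_k$ equals $\sum_{p\in T_k}p$. $\mathrm{OR}(\mathcal{T})$ (resp. $\mathrm{SUM}(\mathcal{T})$) is the minimal size of a circuit computing $\mathcal{T}$ over $(\{0,1\},\vee)$ (resp. $(\mathbb{N},+)$). $\mathrm{OR2}(\mathcal{T})$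 (resp. $\mathrm{SUM2}(\mathcal{T})$) is the minimal number of gates of a circuit computing $\mathcal{T}$ over $(\{0,1\},\vee)$ (resp. $(\mathbb{N},+)$) in which all nodes have fanin at most $2$. Strips: for a line $l\subset\mathbb{R}^2$ and $C>0$, $s(l,C)=\{r\in\mathbb{R}^2\mid \rho(r,l)\leqslant C/2\}$ ($\rho$ Euclidean distance). A line is mostly horizontal inclined to the right if it has equation $y=ax+b$ with $0\leqslant a\leqslant1$; such a line is integer at an image of width $w$ if $a=\frac{e}{w-1}$ for some $e\in\{0,1,\dots,w-1\}$ (here $w=n$). Patterns $T\in\mathcal{M}$ are $C$-parallel if there is a family of integer lines $\{l(T)\mid T\in\mathcal{M}\}$, all with the same slope, such that $T\subset s(l(T),C)$ for all $T\in\mathcal{M}$. A pattern set $\mathcal{L}$ is a strip pattern set of width $C>0$ and density $Q\in\mathbb{N}$ if (1) for every $L\in\mathcal{L}$ there is an integer line $l$ with $L\subset s(l,C)$, and (2) every $C$-parallel subset $\mathcal{M}\subseteq\mathcal{L}$ with $\bigcap_{L\in\mathcal{M}}L\neq\varnothing$ satisfies $|\mathcal{M}|\leqslant Q$. *)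

theory Defs
  imports "HOL-Analysis.Analysis" "HOL-Library.Landau_Symbols"
begin

text \<open>Pixels p_ij are identified with pairs (i,j); nodes of a circuit are either
  input nodes (one per pixel) or gates (identified by natural numbers).\<close>

type_synonym pixel = "nat \<times> nat"
type_synonym node = "pixel + nat"

definition img :: "nat \<Rightarrow> pixel set" where
  "img n = {0..<n} \<times> {0..<n}"

definition pattern_set :: "nat \<Rightarrow> pixel set set \<Rightarrow> bool" where
  "pattern_set n \<T> \<longleftrightarrow> \<T> \<noteq> {} \<and> (\<forall>T\<in>\<T>. T \<noteq> {} \<and> T \<subseteq> img n)"

definition volume :: "pixel set set \<Rightarrow> nat" where
  "volume \<T> = (\<Sum>T\<in>\<T>. card T)"

text \<open>A circuit on the image I_n computing (the outputs for) the pattern set: a finite set G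
  of gates, the in-neighbour set of every gate (nonempty), acyclicity (witnessed by a rank
  function), and an injective assignment of an output node of fanout zero to each pattern.\<close>

definition circuit ::
  "nat \<Rightarrow> pixel set set \<Rightarrow> nat set \<Rightarrow> (nat \<Rightarrow> node set) \<Rightarrow> (pixel set \<Rightarrow> node) \<Rightarrow> bool" where
  "circuit n \<T> G inn out \<longleftrightarrow>
     finite G \<and>
     (\<forall>g\<in>G. inn g \<noteq> {} \<and> inn g \<subseteq> Inl ` img n \<union> Inr ` G) \<and>
     (\<exists>r :: nat \<Rightarrow> nat. \<forall>g\<in>G. \<forall>h. Inr h \<in> inn g \<longrightarrow> r h < r g) \<and>
     inj_on out \<T> \<and>
     out ` \<T> \<subseteq> Inl ` img n \<union> Inr ` G \<and>
     (\<forall>T\<in>\<T>. \<forall>g\<in>G. out T \<notin> inn g)"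

definition circuit_size :: "nat set \<Rightarrow> (nat \<Rightarrow> node set) \<Rightarrow> nat" where
  "circuit_size G inn = (\<Sum>g\<in>G. card (inn g))"

definition computes_or ::
  "nat \<Rightarrow> pixel set set \<Rightarrow> nat set \<Rightarrow> (nat \<Rightarrow> node set) \<Rightarrow> (pixel set \<Rightarrow> node) \<Rightarrow> bool" where
  "computes_or n \<T> G inn out \<longleftrightarrow>
     (\<forall>(x :: pixel \<Rightarrow> bool) (v :: node \<Rightarrow> bool).
        (\<forall>p\<in>img n. v (Inl p) = x p) \<and> (\<forall>g\<in>G. v (Inr g) = (\<exists>u\<in>inn g. v u))
        \<longrightarrow> (\<forall>T\<in>\<T>. v (out T) = (\<exists>p\<in>T. x p)))"

definition computes_sum ::
  "nat \<Rightarrow> pixel set set \<Rightarrow> nat set \<Rightarrow> (nat \<Rightarrow> node set) \<Rightarrow> (pixel set \<Rightarrow> node) \<Rightarrow> bool" where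
  "computes_sum n \<T> G inn out \<longleftrightarrow>
     (\<forall>(x :: pixel \<Rightarrow> nat) (v :: node \<Rightarrow> nat).
        (\<forall>p\<in>img n. v (Inl p) = x p) \<and> (\<forall>g\<in>G. v (Inr g) = (\<Sum>u\<in>inn g. v u))
        \<longrightarrow> (\<forall>T\<in>\<T>. v (out T) = (\<Sum>p\<in>T. x p)))"

definition OR_cost :: "nat \<Rightarrow> pixel set set \<Rightarrow> nat" where
  "OR_cost n \<T> = (LEAST s. \<exists>G inn out. circuit n \<T> G inn out \<and> computes_or n \<T> G inn out
                              \<and> circuit_size G inn = s)"

definition SUM_cost :: "nat \<Rightarrow> pixel set set \<Rightarrow> nat" where
  "SUM_cost n \<T> = (LEAST s. \<exists>G inn out. circuit n \<T> G inn out \<and> computes_sum n \<T> G inn out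
                              \<and> circuit_size G inn = s)"

definition OR2_cost :: "nat \<Rightarrow> pixel set set \<Rightarrow> nat" where
  "OR2_cost n \<T> = (LEAST s. \<exists>G inn out. circuit n \<T> G inn out \<and> (\<forall>g\<in>G. card (inn g) \<le> 2)
                              \<and> computes_or n \<T> G inn out \<and> card G = s)"

definition SUM2_cost :: "nat \<Rightarrow> pixel set set \<Rightarrow> nat" where
  "SUM2_cost n \<T> = (LEAST s. \<exists>G inn out. circuit n \<T> G inn out \<and> (\<forall>g\<in>G. card (inn g) \<le> 2)
                              \<and> computes_sum n \<T> G inn out \<and> card G = s)"

text \<open>Strips and integer lines (mostly horizontal, inclined to the right, width w = n).\<close>

definition line :: "real \<Rightarrow> real \<Rightarrow> (real \<times> real) set" where
  "line a b = {(x, y). y = a * x + b}"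

definition integer_slope :: "nat \<Rightarrow> real \<Rightarrow> bool" where
  "integer_slope n a \<longleftrightarrow> (\<exists>e\<in>{0..<n}. a = real e / real (n - 1))"

definition strip :: "(real \<times> real) set \<Rightarrow> real \<Rightarrow> (real \<times> real) set" where
  "strip l C = {r. infdist r l \<le> C / 2}"

definition pix_pt :: "pixel \<Rightarrow> real \<times> real" where
  "pix_pt p = (real (fst p), real (snd p))"

definition in_strip :: "pixel set \<Rightarrow> (real \<times> real) set \<Rightarrow> real \<Rightarrow> bool" where
  "in_strip T l C \<longleftrightarrow> pix_pt ` T \<subseteq> strip l C"

definition C_parallel :: "nat \<Rightarrow> real \<Rightarrow> pixel set set \<Rightarrow> bool" where
  "C_parallel n C \<M> \<longleftrightarrow>
     (\<exists>a. integer_slope n a \<and> (\<exists>b :: pixel set \<Rightarrow> real. \<forall>T\<in>\<M>. in_strip T (line a (b T)) C))"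

definition strip_pattern_set :: "nat \<Rightarrow> real \<Rightarrow> nat \<Rightarrow> pixel set set \<Rightarrow> bool" where
  "strip_pattern_set n C Q \<L> \<longleftrightarrow>
     pattern_set n \<L> \<and>
     (\<forall>L\<in>\<L>. \<exists>a b. integer_slope n a \<and> in_strip L (line a b) C) \<and>
     (\<forall>\<M>\<subseteq>\<L>. C_parallel n C \<M> \<and> \<Inter>\<M> \<noteq> {} \<longrightarrow> card \<M> \<le> Q)"

end

theory Submission
  imports Defs "HOL-Library.Nat_Bijection"
begin

lemma half_le_aux: "(t::real) \<le> u + v \<Longrightarrow> u \<le> d \<Longrightarrow> v \<le> d \<Longrightarrow> t/2 \<le> d" by linarith

lemma strip_bound:
  assumes "(px, py) \<in> strip (line a b) C" "0 \<le> a" "a \<le> 1"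
  shows "\<bar>py - a*px - b\<bar> \<le> C"
proof -
  have ne: "line a b \<noteq> {}" unfolding line_def by auto
  have lb: "\<bar>py - a*px - b\<bar> / 2 \<le> dist (px,py) z" if "z \<in> line a b" for z
  proof -
    obtain zx zy where z0: "z = (zx,zy)" by (cases z)
    have z: "z = (zx,zy)" "zy = a*zx+b" using that z0 unfolding line_def by auto
    have d1: "\<bar>px - zx\<bar> \<le> dist (px,py) z" using dist_fst_le[of "(px,py)" z] z by (simp add: dist_real_def)
    have d2: "\<bar>py - zy\<bar> \<le> dist (px,py) z" using dist_snd_le[of "(px,py)" z] z by (simp add: dist_real_def)
    have "py - a*px - b = (py - zy) - a*(px - zx)" using z by (simp add: algebra_simps)
    hence "\<bar>py - a*px - b\<bar> \<le> \<bar>py - zy\<bar> + a*\<bar>px - zx\<bar>" using assms(2) abs_triangle_ineq4[of "py - zy" "a*(px - zx)"] by (simp add: abs_mult)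
    also have "\<dots> \<le> \<bar>py - zy\<bar> + \<bar>px - zx\<bar>" using assms(3) mult_right_mono[of a 1 "\<bar>px-zx\<bar>"] by simp
    finally show ?thesis using d2 d1 by (rule half_le_aux)
  qed
  have "\<bar>py - a*px - b\<bar> / 2 \<le> infdist (px,py) (line a b)"
    unfolding infdist_notempty[OF ne] by (rule cINF_greatest[OF ne lb])
  moreover have "infdist (px,py) (line a b) \<le> C/2" using assms(1) unfolding strip_def by simp
  ultimately have "\<bar>py - a*px - b\<bar> / 2 \<le> C/2" by (rule order_trans)
  thus ?thesis by simp
qed

lemma card_spread:
  fixes X :: "nat set"
  assumes "finite X" "\<forall>x\<in>X. \<forall>y\<in>X. real x - real y \<le> w" "0 \<le> w"
  shows "real (card X) \<le> w + 1"
proof (cases "X = {}")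
  case True thus ?thesis using assms by simp
next
  case False
  have "X \<subseteq> {Min X..Max X}" using assms(1) by auto
  hence "card X \<le> card {Min X..Max X}" by (intro card_mono) auto
  also have "\<dots> = Max X + 1 - Min X" by simp
  finally have c: "card X \<le> Max X + 1 - Min X" .
  have "Min X \<le> Max X" using False assms(1) by simp
  moreover have "real (Max X) - real (Min X) \<le> w" using assms False by simp
  ultimately show ?thesis using c by (simp add: of_nat_diff) 
qed

lemma img_finite: "finite (img n)" unfolding img_def by simp

lemma geo:
  fixes L :: "pixel set set" and C :: real
  assumes sps: "strip_pattern_set n C Q L" and C: "C > 0" and n2: "n \<ge> 2" and S: "S \<subseteq> img n"
  shows "real (card {T\<in>L. S \<subseteq> T}) * real (card S) \<le> real Q * (8*C+1) * (2*C+1) * real n"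
proof -
  define R where "R = {T\<in>L. S \<subseteq> T}"
  note sps' = sps[unfolded strip_pattern_set_def]
  have ps: "pattern_set n L" using conjunct1[OF sps'] .
  have sl: "\<forall>L'\<in>L. \<exists>a b. integer_slope n a \<and> in_strip L' (line a b) C" using conjunct1[OF conjunct2[OF sps']] .
  have dens: "\<forall>M\<subseteq>L. C_parallel n C M \<and> \<Inter>M \<noteq> {} \<longrightarrow> card M \<le> Q" using conjunct2[OF conjunct2[OF sps']] .
  have Lsub: "L \<subseteq> Pow (img n)" using ps unfolding pattern_set_def by auto
  have finL: "finite L" by (rule finite_subset[OF Lsub]) (simp add: img_finite)
  have finS: "finite S" by (rule finite_subset[OF S img_finite])
  have finR: "finite R" unfolding R_def using finL by simp
  have ex: "\<exists>p. fst p < n \<and> in_strip T (line (real (fst p) / real (n-1)) (snd p)) C" if "T \<in> L" for T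
  proof -
    have "\<exists>a b. integer_slope n a \<and> in_strip T (line a b) C" using bspec[OF sl that] .
    then obtain a b where ab: "integer_slope n a" "in_strip T (line a b) C" by (elim exE conjE)
    obtain e where e: "e \<in> {0..<n}" "a = real e / real (n-1)" using ab(1) unfolding integer_slope_def by blast
    have "fst (e,b) < n \<and> in_strip T (line (real (fst (e,b)) / real (n-1)) (snd (e,b))) C"
      using e ab(2) by simp
    thus ?thesis by (rule exI)
  qed
  then obtain f where f: "\<forall>T\<in>L. fst (f T) < n \<and> in_strip T (line (real (fst (f T)) / real (n-1)) (snd (f T))) C"
    using bchoice[of L "\<lambda>T p. fst p < n \<and> in_strip T (line (real (fst p) / real (n-1)) (snd p)) C"] ex by auto
  define ef where "ef T = fst (f T)" for T
  define bf where "bf T = snd (f T)" for T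
  have efb: "ef T < n \<and> in_strip T (line (real (ef T) / real (n-1)) (bf T)) C" if "T \<in> L" for T
    using f that unfolding ef_def bf_def by simp
  define af where "af T = real (ef T) / real (n-1)" for T
  have af01: "0 \<le> af T \<and> af T \<le> 1" if "T \<in> L" for T
    using efb[OF that] n2 unfolding af_def by (auto simp: divide_le_eq_1 of_nat_diff)
  have stripT: "\<bar>real y - af T * real x - bf T\<bar> \<le> C" if "T \<in> L" "(x,y) \<in> T" for T x y
  proof -
    have "pix_pt (x,y) \<in> strip (line (af T) (bf T)) C" using efb[OF that(1)] that(2)
      unfolding in_strip_def af_def by blast
    thus ?thesis using strip_bound af01[OF that(1)] unfolding pix_pt_def by simp
  qed
  show ?thesis
  proof (cases "S = {} \<or> R = {}")
    case True thus ?thesis using C unfolding R_def[symmetric] by auto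
  next
    case False
    hence Sne: "S \<noteq> {}" and Rne: "R \<noteq> {}" by auto
    define A where "A = ef ` R"
    have grp: "card {T\<in>R. ef T = e} \<le> Q" for e
    proof (cases "{T\<in>R. ef T = e} = {}")
      case True thus ?thesis by (metis card.empty le0)
    next
      case False
      then obtain T1 where T1: "T1 \<in> R" "ef T1 = e" by auto
      have en: "e < n" using efb T1 unfolding R_def by auto
      let ?M = "{T\<in>R. ef T = e}"
      have "?M \<subseteq> L" unfolding R_def by auto
      moreover have "C_parallel n C ?M"
        unfolding C_parallel_def integer_slope_def
        apply (rule exI[of _ "real e / real (n-1)"])
        using en efb unfolding R_def by fastforce
      moreover have "S \<subseteq> \<Inter>?M" unfolding R_def by auto
      hence "\<Inter>?M \<noteq> {}" using Sne by blast
      ultimately show ?thesis using dens by blast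
    qed
    have "R = (\<Union>e\<in>A. {T\<in>R. ef T = e})" unfolding A_def by auto
    hence "card R \<le> (\<Sum>e\<in>A. card {T\<in>R. ef T = e})" using card_UN_le[of A "\<lambda>e. {T\<in>R. ef T = e}"]
      unfolding A_def using finR by simp
    also have "\<dots> \<le> (\<Sum>e\<in>A. Q)" by (rule sum_mono) (rule grp)
    finally have cR: "card R \<le> card A * Q" by simp
    obtain T0 where T0: "T0 \<in> R" using Rne by auto
    have T0L: "T0 \<in> L" and ST0: "S \<subseteq> T0" using T0 unfolding R_def by auto
    define X where "X = fst ` S"
    have finX: "finite X" "X \<noteq> {}" unfolding X_def using finS Sne by auto
    define x1 where "x1 = Min X"
    define x2 where "x2 = Max X"
    obtain y1 where y1: "(x1,y1) \<in> S" using Min_in[OF finX] unfolding x1_def X_def by auto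
    obtain y2 where y2: "(x2,y2) \<in> S" using Max_in[OF finX] unfolding x2_def X_def by auto
    have x12: "x1 \<le> x2" unfolding x1_def x2_def using finX by simp
    have Xsub: "X \<subseteq> {x1..x2}" unfolding x1_def x2_def using finX by auto
    have x2n: "x2 < n" using y2 S unfolding img_def by auto
    define D where "D = x2 - x1"
    have cX: "card X \<le> D + 1" using card_mono[OF _ Xsub] x12 unfolding D_def by simp
    have Dn: "D + 1 \<le> n" using x2n unfolding D_def by simp
    have col: "real (card {y. (x,y) \<in> S}) \<le> 2*C + 1" for x
    proof (rule card_spread)
      have "{y. (x,y) \<in> S} \<subseteq> snd ` S" by force
      thus "finite {y. (x,y) \<in> S}" using finS finite_subset by blast
      show "0 \<le> 2*C" using C by simp
      show "\<forall>u\<in>{y. (x,y) \<in> S}. \<forall>v\<in>{y. (x,y) \<in> S}. real u - real v \<le> 2*C"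
      proof (intro ballI)
        fix u v assume "u \<in> {y. (x,y) \<in> S}" "v \<in> {y. (x,y) \<in> S}"
        hence "\<bar>real u - af T0 * real x - bf T0\<bar> \<le> C" "\<bar>real v - af T0 * real x - bf T0\<bar> \<le> C"
          using stripT[OF T0L] ST0 by auto
        thus "real u - real v \<le> 2*C" by linarith
      qed
    qed
    have SS: "S = Sigma X (\<lambda>x. {y. (x,y) \<in> S})" unfolding X_def by force
    have finY: "finite {y. (x,y) \<in> S}" for x
    proof -
      have "{y. (x,y) \<in> S} \<subseteq> snd ` S" by force
      thus ?thesis using finS finite_subset by blast
    qed
    have "card S = (\<Sum>x\<in>X. card {y. (x,y) \<in> S})"
      using card_SigmaI[OF finX(1), of "\<lambda>x. {y. (x,y) \<in> S}"] finY SS by simp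
    hence "real (card S) = (\<Sum>x\<in>X. real (card {y. (x,y) \<in> S}))" by simp
    also have "\<dots> \<le> (\<Sum>x\<in>X. 2*C+1)" by (rule sum_mono) (rule col)
    finally have cS: "real (card S) \<le> real (card X) * (2*C+1)" by simp
    hence cS2: "real (card S) \<le> real (D+1) * (2*C+1)"
    proof -
      have "real (card X) \<le> real (D+1)" using cX by linarith
      hence "real (card X) * (2*C+1) \<le> real (D+1) * (2*C+1)" using C by (intro mult_right_mono) auto
      thus ?thesis using cS by linarith
    qed
    have slope: "(real (ef T) - real (ef T')) * real D \<le> 4*C*real (n-1)" if "T \<in> R" "T' \<in> R" for T T'
    proof -
      have TL: "T \<in> L" "T' \<in> L" and ST: "S \<subseteq> T" "S \<subseteq> T'" using that unfolding R_def by auto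
      have a: "\<bar>real y1 - af T * real x1 - bf T\<bar> \<le> C" "\<bar>real y2 - af T * real x2 - bf T\<bar> \<le> C"
              "\<bar>real y1 - af T' * real x1 - bf T'\<bar> \<le> C" "\<bar>real y2 - af T' * real x2 - bf T'\<bar> \<le> C"
        using stripT TL ST y1 y2 by blast+
      have rD: "real D = real x2 - real x1" unfolding D_def using x12 by (simp add: of_nat_diff)
      have b: "real y2 - real y1 - af T' * (real x2 - real x1) \<le> 2*C"
              "real y2 - real y1 - af T * (real x2 - real x1) \<ge> -2*C"
        using a by (auto simp: abs_le_iff algebra_simps)
      have "(af T - af T') * real D = (real y2 - real y1 - af T' * (real x2 - real x1)) - (real y2 - real y1 - af T * (real x2 - real x1))"
        unfolding rD by (simp add: algebra_simps)
      hence "(af T - af T') * real D \<le> 4*C" using b by linarith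
      moreover have "af T - af T' = (real (ef T) - real (ef T')) / real (n-1)"
        unfolding af_def by (simp add: diff_divide_distrib)
      moreover have "real (n-1) > 0" using n2 by simp
      ultimately show ?thesis by (simp add: field_simps)
    qed
    have An: "A \<subseteq> {0..<n}" unfolding A_def using efb unfolding R_def by auto
    have finA: "finite A" using An finite_subset by blast
    have main: "real (card A) * real (card S) \<le> (8*C+1) * (2*C+1) * real n"
    proof (cases "D = 0")
      case True
      have "real (card A) \<le> real n" using card_mono[OF _ An] by simp
      moreover have "real (card S) \<le> 2*C+1" using cS2 True by simp
      ultimately have "real (card A) * real (card S) \<le> real n * (2*C+1)"
        by (intro mult_mono) auto
      also have "\<dots> \<le> (8*C+1) * (2*C+1) * real n" using C by (simp add: field_simps)
      finally show ?thesis .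
    next
      case False
      hence Dpos: "real D > 0" by simp
      have "real (card A) \<le> 4*C*real (n-1) / real D + 1"
      proof (rule card_spread[OF finA])
        show "0 \<le> 4*C*real (n-1) / real D" using C Dpos by simp
        show "\<forall>x\<in>A. \<forall>y\<in>A. real x - real y \<le> 4*C*real (n-1) / real D"
          using slope Dpos unfolding A_def by (auto simp: pos_le_divide_eq)
      qed
      hence "real (card A) * real (card S) \<le> (4*C*real (n-1) / real D + 1) * (real (D+1) * (2*C+1))"
        using cS2 by (intro mult_mono) (auto simp: C)
      also have "\<dots> = (4*C*real (n-1) * (real D + 1) / real D + (real D + 1)) * (2*C+1)"
        using Dpos by (simp add: field_simps)
      also have "\<dots> \<le> (8*C*real n + real n) * (2*C+1)"
      proof (rule mult_right_mono)
        have "(real D + 1) / real D \<le> 2" using Dpos False by (simp add: divide_le_eq)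
        hence "4*C*real (n-1) * ((real D + 1) / real D) \<le> 4*C*real (n-1) * 2"
          using C by (intro mult_left_mono) auto
        moreover have "real (n-1) \<le> real n" by simp
        moreover have "4*C*real (n-1) * 2 \<le> 8*C*real n" using C by simp
        moreover have "4*C*real (n-1) * (real D + 1) / real D = 4*C*real (n-1) * ((real D + 1) / real D)"
          by simp
        ultimately have "4*C*real (n-1) * (real D + 1) / real D \<le> 8*C*real n" by linarith
        moreover have "real D + 1 \<le> real n" using Dn by linarith
        ultimately show "4*C*real (n-1) * (real D + 1) / real D + (real D + 1) \<le> 8*C*real n + real n"
          by linarith
        show "0 \<le> 2*C+1" using C by simp
      qed
      also have "\<dots> = (8*C+1) * (2*C+1) * real n" by (simp add: algebra_simps)
      finally show ?thesis .
    qed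
    have "real (card R) * real (card S) \<le> real (card A) * real Q * real (card S)"
      using cR by (intro mult_right_mono) (auto simp flip: of_nat_mult)
    also have "\<dots> = real Q * (real (card A) * real (card S))" by simp
    also have "\<dots> \<le> real Q * ((8*C+1) * (2*C+1) * real n)" by (intro mult_left_mono main) auto
    finally show ?thesis unfolding R_def by simp
  qed
qed

definition cedges :: "nat set \<Rightarrow> (nat \<Rightarrow> node set) \<Rightarrow> (node \<times> node) set" where
  "cedges G inn = {(u, Inr g) | u g. g \<in> G \<and> u \<in> inn g}"

definition rs :: "nat set \<Rightarrow> (nat \<Rightarrow> node set) \<Rightarrow> node \<Rightarrow> pixel set" where
  "rs G inn u = {p. (Inl p, u) \<in> (cedges G inn)\<^sup>*}"

definition nrk :: "(nat \<Rightarrow> nat) \<Rightarrow> node \<Rightarrow> nat" where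
  "nrk r u = (case u of Inl _ \<Rightarrow> 0 | Inr g \<Rightarrow> Suc (r g))"

lemma cedges_iff: "(u, w) \<in> cedges G inn \<longleftrightarrow> (\<exists>g. w = Inr g \<and> g \<in> G \<and> u \<in> inn g)"
  unfolding cedges_def by auto

lemma rt_Inl: "(Inl p, Inl q) \<in> (cedges G inn)\<^sup>* \<longleftrightarrow> p = q"
proof
  assume "(Inl p, Inl q) \<in> (cedges G inn)\<^sup>*"
  thus "p = q"
  proof (cases rule: rtranclE)
    case (step z) thus ?thesis by (auto simp: cedges_iff)
  qed simp
qed simp

lemma rt_Inr: "g \<in> G \<Longrightarrow> (x, Inr g) \<in> (cedges G inn)\<^sup>* \<longleftrightarrow> x = Inr g \<or> (\<exists>u\<in>inn g. (x, u) \<in> (cedges G inn)\<^sup>*)"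
proof
  assume "(x, Inr g) \<in> (cedges G inn)\<^sup>*"
  thus "x = Inr g \<or> (\<exists>u\<in>inn g. (x, u) \<in> (cedges G inn)\<^sup>*)"
  proof (cases rule: rtranclE)
    case (step z) thus ?thesis by (auto simp: cedges_iff)
  qed simp
next
  assume g: "g \<in> G" and h: "x = Inr g \<or> (\<exists>u\<in>inn g. (x, u) \<in> (cedges G inn)\<^sup>*)"
  from h show "(x, Inr g) \<in> (cedges G inn)\<^sup>*"
  proof
    assume "\<exists>u\<in>inn g. (x, u) \<in> (cedges G inn)\<^sup>*"
    then obtain u where u: "u \<in> inn g" "(x, u) \<in> (cedges G inn)\<^sup>*" by blast
    have "(u, Inr g) \<in> cedges G inn" using u g by (auto simp: cedges_iff)
    thus ?thesis using u(2) by (rule rtrancl_into_rtrancl[rotated])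
  qed simp
qed

lemma rt_Inr_Inl: "g \<in> G \<Longrightarrow> (Inl p, Inr g) \<in> (cedges G inn)\<^sup>* \<longleftrightarrow> (\<exists>u\<in>inn g. (Inl p, u) \<in> (cedges G inn)\<^sup>*)"
  using rt_Inr[of g G "Inl p" inn] by simp

definition RC :: "nat \<Rightarrow> pixel set set \<Rightarrow> nat set \<Rightarrow> (nat \<Rightarrow> node set) \<Rightarrow> (pixel set \<Rightarrow> node) \<Rightarrow> bool" where
  "RC n L G inn out \<longleftrightarrow> (\<forall>T\<in>L. \<forall>p\<in>img n. (Inl p, out T) \<in> (cedges G inn)\<^sup>* \<longleftrightarrow> p \<in> T)"

lemma or_RC:
  assumes "circuit n L G inn out" "computes_or n L G inn out"
  shows "RC n L G inn out"
  unfolding RC_def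
proof (intro ballI)
  fix T p assume T: "T \<in> L" and p: "p \<in> img n"
  define x where "x q = (q = p)" for q
  define v where "v u = ((Inl p, u) \<in> (cedges G inn)\<^sup>*)" for u
  have h1: "\<forall>q\<in>img n. v (Inl q) = x q" unfolding v_def x_def using rt_Inl by metis
  have h2: "\<forall>g\<in>G. v (Inr g) = (\<exists>u\<in>inn g. v u)" unfolding v_def using rt_Inr_Inl by metis
  have "v (out T) = (\<exists>q\<in>T. x q)" using assms(2) h1 h2 T unfolding computes_or_def by blast
  thus "(Inl p, out T) \<in> (cedges G inn)\<^sup>* \<longleftrightarrow> p \<in> T" unfolding v_def x_def by auto
qed

lemma circuitD:
  assumes "circuit n L G inn out"
  shows "finite G" "\<And>g. g \<in> G \<Longrightarrow> inn g \<noteq> {}" "\<And>g. g \<in> G \<Longrightarrow> inn g \<subseteq> Inl ` img n \<union> Inr ` G"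
    "\<exists>r :: nat \<Rightarrow> nat. \<forall>g\<in>G. \<forall>h. Inr h \<in> inn g \<longrightarrow> r h < r g"
    "inj_on out L" "out ` L \<subseteq> Inl ` img n \<union> Inr ` G" "\<And>T g. T \<in> L \<Longrightarrow> g \<in> G \<Longrightarrow> out T \<notin> inn g"
  using assms unfolding circuit_def by blast+

lemma nrk_edge:
  assumes "\<forall>g\<in>G. \<forall>h. Inr h \<in> inn g \<longrightarrow> r h < r g" "(u, w) \<in> cedges G inn"
  shows "nrk r u < nrk r w"
  using assms by (auto simp: cedges_iff nrk_def split: sum.splits)

lemma nrk_rt:
  assumes "\<forall>g\<in>G. \<forall>h. Inr h \<in> inn g \<longrightarrow> r h < r g" "(u, w) \<in> (cedges G inn)\<^sup>*"
  shows "nrk r u \<le> nrk r w"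
  using assms(2)
proof (induction rule: rtrancl_induct)
  case (step y z) thus ?case using nrk_edge[OF assms(1), of y z] by simp
qed simp

primrec sit :: "(pixel \<Rightarrow> nat) \<Rightarrow> (nat \<Rightarrow> node set) \<Rightarrow> nat \<Rightarrow> node \<Rightarrow> nat" where
  "sit x inn 0 u = (case u of Inl p \<Rightarrow> x p | Inr g \<Rightarrow> 0)"
| "sit x inn (Suc k) u = (case u of Inl p \<Rightarrow> x p | Inr g \<Rightarrow> (\<Sum>w\<in>inn g. sit x inn k w))"

lemma sit_Inl: "sit x inn k (Inl p) = x p" by (cases k) auto

lemma sit_stable:
  assumes r: "\<forall>g\<in>G. \<forall>h. Inr h \<in> inn g \<longrightarrow> r h < r g"
    and inn: "\<And>g. g \<in> G \<Longrightarrow> inn g \<subseteq> Inl ` A \<union> Inr ` G"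
  shows "u \<in> Inl ` UNIV \<union> Inr ` G \<Longrightarrow> nrk r u \<le> k \<Longrightarrow> sit x inn (Suc k) u = sit x inn k u"
proof (induction k arbitrary: u)
  case 0 thus ?case by (auto simp: nrk_def)
next
  case (Suc k)
  show ?case
  proof (cases u)
    case (Inl p) thus ?thesis by (simp add: sit_Inl)
  next
    case (Inr g)
    hence g: "g \<in> G" using Suc.prems by auto
    have "sit x inn (Suc k) w = sit x inn k w" if w: "w \<in> inn g" for w
    proof (rule Suc.IH)
      show "w \<in> Inl ` UNIV \<union> Inr ` G" using inn[OF g] w by auto
      have "nrk r w < nrk r u"
        using w g r Inr by (auto simp: nrk_def split: sum.splits)
      thus "nrk r w \<le> k" using Suc.prems by simp
    qed
    thus ?thesis using Inr by simp
  qed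
qed

lemma sum_RC:
  assumes circ: "circuit n L G inn out" and cs: "computes_sum n L G inn out"
    and pL: "pattern_set n L"
  shows "RC n L G inn out"
  unfolding RC_def
proof (intro ballI)
  fix T p assume T: "T \<in> L" and p: "p \<in> img n"
  note cd = circuitD[OF circ]
  obtain r :: "nat \<Rightarrow> nat" where r: "\<forall>g\<in>G. \<forall>h. Inr h \<in> inn g \<longrightarrow> r h < r g" using cd(4) by blast
  define E where "E = cedges G inn"
  define x where "x q = (if q = p then 1 else (0::nat))" for q
  define K where "K = (\<Sum>g\<in>G. Suc (r g))"
  define v where "v = sit x inn K"
  have vl: "v (Inl q) = x q" for q unfolding v_def by (rule sit_Inl)
  have vg: "v (Inr g) = (\<Sum>w\<in>inn g. v w)" if g: "g \<in> G" for g
  proof -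
    have "nrk r (Inr g) \<le> K" unfolding K_def nrk_def using member_le_sum[OF g, of "\<lambda>g. Suc (r g)"] cd(1) by simp
    hence "sit x inn (Suc K) (Inr g) = sit x inn K (Inr g)"
      using sit_stable[OF r cd(3), of "Inr g" K x] g by auto
    thus ?thesis unfolding v_def by simp
  qed
  have finI: "finite (img n)" by (rule img_finite)
  have key: "u \<in> Inl ` img n \<union> Inr ` G \<Longrightarrow> (0 < v u \<longleftrightarrow> (Inl p, u) \<in> E\<^sup>*)" for u
  proof (induction u rule: measure_induct_rule[of "nrk r"])
    case (less u)
    show ?case
    proof (cases u)
      case (Inl q) thus ?thesis using vl rt_Inl unfolding x_def E_def by auto
    next
      case (Inr g)
      hence g: "g \<in> G" using less.prems by auto
      have fin: "finite (inn g)" using cd(3)[OF g] finI cd(1) finite_subset by blast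
      have IH: "0 < v w \<longleftrightarrow> (Inl p, w) \<in> E\<^sup>*" if w: "w \<in> inn g" for w
      proof (rule less.IH)
        show "nrk r w < nrk r u" using w g r Inr by (auto simp: nrk_def split: sum.splits)
        show "w \<in> Inl ` img n \<union> Inr ` G" using cd(3)[OF g] w by blast
      qed
      have z: "(sum v (inn g) = 0) = (\<forall>w\<in>inn g. v w = 0)" using fin by simp
      have "0 < v u \<longleftrightarrow> sum v (inn g) \<noteq> 0" using vg[OF g] Inr by simp
      also have "\<dots> \<longleftrightarrow> (\<exists>w\<in>inn g. 0 < v w)" using z by auto
      also have "\<dots> \<longleftrightarrow> (\<exists>w\<in>inn g. (Inl p, w) \<in> E\<^sup>*)" by (rule bex_cong[OF refl IH])
      also have "\<dots> \<longleftrightarrow> (Inl p, u) \<in> E\<^sup>*" using rt_Inr_Inl[OF g] Inr unfolding E_def by simp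
      finally show ?thesis .
    qed
  qed
  have "T \<subseteq> img n" using pL T unfolding pattern_set_def by auto
  hence finT: "finite T" using finI by (rule finite_subset)
  have h1: "\<forall>q\<in>img n. v (Inl q) = x q" using vl by simp
  have h2: "\<forall>g\<in>G. v (Inr g) = (\<Sum>w\<in>inn g. v w)" using vg by simp
  note imp = cs[unfolded computes_sum_def, THEN spec[of _ x], THEN spec[of _ v]]
  have "\<forall>T\<in>L. v (out T) = (\<Sum>q\<in>T. x q)" by (rule mp[OF imp]) (rule conjI[OF h1 h2])
  hence "v (out T) = (\<Sum>q\<in>T. x q)" using T by (rule bspec)
  also have "\<dots> = (if p \<in> T then 1 else 0)" unfolding x_def using finT by simp
  finally have "0 < v (out T) \<longleftrightarrow> p \<in> T" by simp
  moreover have "out T \<in> Inl ` img n \<union> Inr ` G" using cd(6) T by blast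
  moreover have "0 < v (out T) \<longleftrightarrow> (Inl p, out T) \<in> E\<^sup>*" by (rule key) fact
  ultimately show "(Inl p, out T) \<in> (cedges G inn)\<^sup>* \<longleftrightarrow> p \<in> T" unfolding E_def by simp
qed

lemma rs_sub:
  assumes circ: "circuit n L G inn out"
  shows "rs G inn u \<subseteq> img n \<union> {p. u = Inl p}"
proof
  fix p assume "p \<in> rs G inn u"
  hence "(Inl p, u) \<in> (cedges G inn)\<^sup>*" unfolding rs_def by simp
  thus "p \<in> img n \<union> {p. u = Inl p}"
  proof (cases rule: converse_rtranclE)
    case (step y)
    then obtain g where g: "g \<in> G" "Inl p \<in> inn g" by (auto simp: cedges_iff)
    thus ?thesis using circuitD(3)[OF circ g(1)] by auto
  qed simp
qed

lemma finite_rs: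
  assumes circ: "circuit n L G inn out"
  shows "finite (rs G inn u)"
proof -
  have "{p. u = Inl p} \<subseteq> {projl u}" by auto
  hence "finite {p. u = Inl p}" by (rule finite_subset) simp
  hence "finite (img n \<union> {p. u = Inl p})" using img_finite by simp
  thus ?thesis using rs_sub[OF circ] by (rule finite_subset[rotated])
qed

lemma rs_Inr_sub:
  assumes circ: "circuit n L G inn out"
  shows "rs G inn (Inr g) \<subseteq> img n"
  using rs_sub[OF circ, of "Inr g"] by auto

lemma rs_Inl: "rs G inn (Inl q) = {q}"
  unfolding rs_def using rt_Inl by auto

lemma rs_mono:
  assumes "(u, w) \<in> (cedges G inn)\<^sup>*"
  shows "rs G inn u \<subseteq> rs G inn w"
  unfolding rs_def using assms by auto

lemma ln_step:
  fixes a b :: real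
  assumes "0 < a" "0 < b"
  shows "ln a \<le> a / b + ln b"
proof -
  have "ln (a / b) \<le> a / b - 1" using assms by (intro ln_le_minus_one) simp
  moreover have "ln (a/b) = ln a - ln b" using assms by (rule ln_divide_pos)
  ultimately show ?thesis by linarith
qed

lemma chain:
  fixes r :: "nat \<Rightarrow> nat"
  assumes circ: "circuit n L G inn out"
    and r: "\<forall>g\<in>G. \<forall>h. Inr h \<in> inn g \<longrightarrow> r h < r g"
  shows "w \<in> Inl ` img n \<union> Inr ` G \<Longrightarrow> p \<in> rs G inn w \<Longrightarrow>
    \<exists>P \<subseteq> cedges G inn. (\<forall>e\<in>P. p \<in> rs G inn (fst e) \<and> (snd e, w) \<in> (cedges G inn)\<^sup>*) \<and>
      ln (real (card (rs G inn w))) \<le> (\<Sum>e\<in>P. real (card (rs G inn (snd e))) / real (card (rs G inn (fst e))))"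
proof (induction w rule: measure_induct_rule[of "nrk r"])
  case (less w)
  define E where "E = cedges G inn"
  define S where "S = rs G inn"
  show ?case
  proof (cases w)
    case (Inl q)
    hence "q = p" using less.prems(2) rs_Inl by auto
    hence "rs G inn w = {p}" using Inl rs_Inl by simp
    hence "ln (real (card (rs G inn w))) = 0" by simp
    thus ?thesis by (intro exI[of _ "{}"]) simp
  next
    case (Inr g)
    hence g: "g \<in> G" using less.prems(1) by auto
    have "(Inl p, Inr g) \<in> E\<^sup>*" using less.prems(2) Inr unfolding rs_def E_def by simp
    then obtain u where u: "u \<in> inn g" "(Inl p, u) \<in> E\<^sup>*" using rt_Inr_Inl[OF g] unfolding E_def by blast
    have uV: "u \<in> Inl ` img n \<union> Inr ` G" using circuitD(3)[OF circ g] u(1) by blast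
    have uw: "(u, w) \<in> E" using u(1) g Inr unfolding E_def by (simp add: cedges_iff)
    have rku: "nrk r u < nrk r w" using nrk_edge[OF r] uw unfolding E_def by blast
    have pu: "p \<in> S u" using u(2) unfolding S_def rs_def E_def by simp
    obtain P where P: "P \<subseteq> E" "\<forall>e\<in>P. p \<in> S (fst e) \<and> (snd e, u) \<in> E\<^sup>*"
      "ln (real (card (S u))) \<le> (\<Sum>e\<in>P. real (card (S (snd e))) / real (card (S (fst e))))"
      using less.IH[OF rku uV pu[unfolded S_def]] unfolding E_def S_def by blast
    have finE: "finite E"
    proof -
      have "E \<subseteq> (Inl ` img n \<union> Inr ` G) \<times> (Inr ` G)"
      proof
        fix e assume "e \<in> E"
        then obtain u' g' where e: "e = (u', Inr g')" "g' \<in> G" "u' \<in> inn g'" unfolding E_def cedges_def by blast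
        have "u' \<in> Inl ` img n \<union> Inr ` G" using circuitD(3)[OF circ e(2)] e(3) by blast
        thus "e \<in> (Inl ` img n \<union> Inr ` G) \<times> (Inr ` G)" using e by blast
      qed
      moreover have "finite ((Inl ` img n \<union> Inr ` G) \<times> (Inr ` G))"
        using img_finite circuitD(1)[OF circ] by simp
      ultimately show ?thesis by (rule finite_subset)
    qed
    have finP: "finite P" using P(1) finE by (rule finite_subset)
    have notin: "(u, w) \<notin> P"
    proof
      assume "(u, w) \<in> P"
      hence "(w, u) \<in> E\<^sup>*" using P(2) by auto
      hence "nrk r w \<le> nrk r u" using nrk_rt[OF r] unfolding E_def by blast
      thus False using rku by simp
    qed
    define P' where "P' = insert (u, w) P"
    have "P' \<subseteq> E" unfolding P'_def using P(1) uw by simp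
    moreover have "\<forall>e\<in>P'. p \<in> S (fst e) \<and> (snd e, w) \<in> E\<^sup>*"
    proof
      fix e assume "e \<in> P'"
      thus "p \<in> S (fst e) \<and> (snd e, w) \<in> E\<^sup>*"
      proof (cases "e = (u, w)")
        case False
        hence e: "e \<in> P" using \<open>e \<in> P'\<close> unfolding P'_def by simp
        hence "(snd e, u) \<in> E\<^sup>*" using P(2) by simp
        hence "(snd e, w) \<in> E\<^sup>*" using uw by (rule rtrancl_into_rtrancl)
        thus ?thesis using P(2) e by simp
      qed (simp add: pu)
    qed
    moreover have "ln (real (card (S w))) \<le> (\<Sum>e\<in>P'. real (card (S (snd e))) / real (card (S (fst e))))"
    proof -
      have sum: "(\<Sum>e\<in>P'. real (card (S (snd e))) / real (card (S (fst e))))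
          = real (card (S w)) / real (card (S u)) + (\<Sum>e\<in>P. real (card (S (snd e))) / real (card (S (fst e))))"
        unfolding P'_def using finP notin by simp
      have "S u \<subseteq> S w" unfolding S_def using uw unfolding E_def by (intro rs_mono) simp
      hence pw: "p \<in> S w" using pu by blast
      have "0 < card (S u)" using pu finite_rs[OF circ] unfolding S_def by (auto simp: card_gt_0_iff)
      moreover have "0 < card (S w)" using pw finite_rs[OF circ] unfolding S_def by (auto simp: card_gt_0_iff)
      ultimately have "ln (real (card (S w))) \<le> real (card (S w)) / real (card (S u)) + ln (real (card (S u)))"
        by (intro ln_step) simp_all
      thus ?thesis using sum P(3) by linarith
    qed
    ultimately show ?thesis unfolding E_def S_def by blast
  qed
qed

lemma finite_cedges:
  assumes circ: "circuit n L G inn out"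
  shows "finite (cedges G inn)"
proof -
  have "cedges G inn \<subseteq> (Inl ` img n \<union> Inr ` G) \<times> (Inr ` G)"
  proof
    fix e assume "e \<in> cedges G inn"
    then obtain u' g' where e: "e = (u', Inr g')" "g' \<in> G" "u' \<in> inn g'" unfolding cedges_def by blast
    have "u' \<in> Inl ` img n \<union> Inr ` G" using circuitD(3)[OF circ e(2)] e(3) by blast
    thus "e \<in> (Inl ` img n \<union> Inr ` G) \<times> (Inr ` G)" using e by blast
  qed
  moreover have "finite ((Inl ` img n \<union> Inr ` G) \<times> (Inr ` G))"
    using img_finite circuitD(1)[OF circ] by simp
  ultimately show ?thesis by (rule finite_subset)
qed

lemma size_eq:
  assumes circ: "circuit n L G inn out"
  shows "circuit_size G inn = card (cedges G inn)"
proof -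
  have finG: "finite G" using circuitD(1)[OF circ] .
  have fin: "\<forall>g\<in>G. finite (inn g)"
  proof
    fix g assume g: "g \<in> G"
    have "finite (Inl ` img n \<union> Inr ` G)" using img_finite finG by simp
    thus "finite (inn g)" using circuitD(3)[OF circ g] by (rule finite_subset[rotated])
  qed
  have eq: "cedges G inn = (\<lambda>(g,u). (u, Inr g)) ` Sigma G inn" unfolding cedges_def by force
  have inj: "inj_on (\<lambda>(g,u). (u, Inr g)) (Sigma G inn)" by (auto simp: inj_on_def)
  have "card (cedges G inn) = card (Sigma G inn)" unfolding eq by (rule card_image[OF inj])
  also have "\<dots> = (\<Sum>g\<in>G. card (inn g))" by (rule card_SigmaI[OF finG fin])
  finally show ?thesis unfolding circuit_size_def by simp
qed

lemma per_T:
  assumes circ: "circuit n L G inn out" and rc: "RC n L G inn out" and pL: "pattern_set n L"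
    and T: "T \<in> L"
  shows "real (card T) * ln (real (card T)) \<le>
    (\<Sum>e\<in>cedges G inn. if (snd e, out T) \<in> (cedges G inn)\<^sup>* then real (card (rs G inn (snd e))) else 0)"
proof -
  define E where "E = cedges G inn"
  define S where "S = rs G inn"
  define oT where "oT = out T"
  obtain r :: "nat \<Rightarrow> nat" where r: "\<forall>g\<in>G. \<forall>h. Inr h \<in> inn g \<longrightarrow> r h < r g"
    using circuitD(4)[OF circ] by blast
  have oV: "oT \<in> Inl ` img n \<union> Inr ` G" using circuitD(6)[OF circ] T unfolding oT_def by blast
  have Tsub: "T \<subseteq> img n" and Tne: "T \<noteq> {}" using pL T unfolding pattern_set_def by auto
  have finT: "finite T" using Tsub img_finite by (rule finite_subset)
  have finE: "finite E" unfolding E_def by (rule finite_cedges[OF circ])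
  have finS: "finite (S u)" for u unfolding S_def by (rule finite_rs[OF circ])
  have TS: "T \<subseteq> S oT"
  proof
    fix p assume p: "p \<in> T"
    hence "p \<in> img n" using Tsub by blast
    hence "(Inl p, out T) \<in> (cedges G inn)\<^sup>* \<longleftrightarrow> p \<in> T" using rc T unfolding RC_def by blast
    thus "p \<in> S oT" using p unfolding S_def rs_def oT_def by simp
  qed
  define wt where "wt e = real (card (S (snd e))) / real (card (S (fst e)))" for e
  define ET where "ET = {e\<in>E. (snd e, oT) \<in> E\<^sup>*}"
  have finET: "finite ET" unfolding ET_def using finE by simp
  have ex: "\<exists>P. P \<subseteq> ET \<and> (\<forall>e\<in>P. p \<in> S (fst e)) \<and> ln (real (card (S oT))) \<le> (\<Sum>e\<in>P. wt e)" if p: "p \<in> T" for p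
  proof -
    have "p \<in> rs G inn oT" using TS p unfolding S_def by blast
    from chain[OF circ r oV this] obtain P where P: "P \<subseteq> E" "\<forall>e\<in>P. p \<in> S (fst e) \<and> (snd e, oT) \<in> E\<^sup>*"
      "ln (real (card (S oT))) \<le> (\<Sum>e\<in>P. wt e)" unfolding E_def S_def wt_def by blast
    have PE: "P \<subseteq> ET" using P(1,2) unfolding ET_def by auto
    have "\<forall>e\<in>P. p \<in> S (fst e)" using P(2) by simp
    thus ?thesis using PE P(3) by (intro exI[of _ P] conjI)
  qed
  have all: "\<forall>p\<in>T. \<exists>P. P \<subseteq> ET \<and> (\<forall>e\<in>P. p \<in> S (fst e)) \<and> ln (real (card (S oT))) \<le> (\<Sum>e\<in>P. wt e)"
    using ex by (intro ballI) 
  obtain Pf where Pf0: "\<forall>p\<in>T. Pf p \<subseteq> ET \<and> (\<forall>e\<in>Pf p. p \<in> S (fst e)) \<and> ln (real (card (S oT))) \<le> (\<Sum>e\<in>Pf p. wt e)"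
    using bchoice[OF all] by auto
  have Pf1: "Pf p \<subseteq> ET" and Pf2: "\<And>e. e \<in> Pf p \<Longrightarrow> p \<in> S (fst e)"
    and Pf3: "ln (real (card (S oT))) \<le> (\<Sum>e\<in>Pf p. wt e)" if "p \<in> T" for p
    using bspec[OF Pf0 that] by auto
  have cT: "0 < card T" using finT Tne by (simp add: card_gt_0_iff)
  have "card T \<le> card (S oT)" using card_mono[OF finS TS] .
  hence lnT: "ln (real (card T)) \<le> ln (real (card (S oT)))" using cT by simp
  have "real (card T) * ln (real (card T)) = (\<Sum>p\<in>T. ln (real (card T)))" by simp
  also have "\<dots> \<le> (\<Sum>p\<in>T. \<Sum>e\<in>Pf p. wt e)"
  proof (rule sum_mono)
    fix p assume "p \<in> T" thus "ln (real (card T)) \<le> (\<Sum>e\<in>Pf p. wt e)" using Pf3 lnT by (meson order_trans)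
  qed
  also have "\<dots> = (\<Sum>p\<in>T. \<Sum>e\<in>ET. if e \<in> Pf p then wt e else 0)"
  proof (rule sum.cong[OF refl])
    fix p assume p: "p \<in> T"
    have "ET \<inter> Pf p = Pf p" using Pf1[OF p] by (rule Int_absorb1)
    thus "(\<Sum>e\<in>Pf p. wt e) = (\<Sum>e\<in>ET. if e \<in> Pf p then wt e else 0)"
      using sum.inter_restrict[OF finET, of wt "Pf p"] by simp
  qed
  also have "\<dots> = (\<Sum>e\<in>ET. \<Sum>p\<in>T. if e \<in> Pf p then wt e else 0)" by (rule sum.swap)
  also have "\<dots> \<le> (\<Sum>e\<in>ET. real (card (S (snd e))))"
  proof (rule sum_mono)
    fix e assume e: "e \<in> ET"
    define B where "B = T \<inter> {p. e \<in> Pf p}"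
    have "(\<Sum>p\<in>T. if e \<in> Pf p then wt e else 0) = (\<Sum>p\<in>B. wt e)"
      unfolding B_def using sum.inter_restrict[OF finT, of "\<lambda>_. wt e" "{p. e \<in> Pf p}"] by simp
    also have "\<dots> = real (card B) * wt e" by simp
    also have "\<dots> \<le> real (card (S (snd e)))"
    proof -
      have BS: "B \<subseteq> S (fst e)"
      proof
        fix p assume "p \<in> B"
        hence "p \<in> T" "e \<in> Pf p" unfolding B_def by auto
        thus "p \<in> S (fst e)" by (rule Pf2)
      qed
      show ?thesis
      proof (cases "card (S (fst e)) = 0")
        case True
        hence "S (fst e) = {}" using finS by simp
        hence "B = {}" using BS by blast
        thus ?thesis by simp
      next
        case False
        have "card B \<le> card (S (fst e))" using card_mono[OF finS BS] .
        hence "real (card B) * wt e \<le> real (card (S (fst e))) * wt e"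
          unfolding wt_def by (intro mult_right_mono) auto
        also have "\<dots> = real (card (S (snd e)))" unfolding wt_def using False by simp
        finally show ?thesis .
      qed
    qed
    finally show "(\<Sum>p\<in>T. if e \<in> Pf p then wt e else 0) \<le> real (card (S (snd e)))" .
  qed
  also have "\<dots> = (\<Sum>e\<in>E. if (snd e, oT) \<in> E\<^sup>* then real (card (S (snd e))) else 0)"
    unfolding ET_def by (rule sum.inter_filter[OF finE])
  finally show ?thesis unfolding E_def S_def oT_def .
qed

lemma total:
  assumes circ: "circuit n L G inn out" and rc: "RC n L G inn out" and pL: "pattern_set n L"
    and K: "\<And>S'. S' \<subseteq> img n \<Longrightarrow> real (card {T\<in>L. S' \<subseteq> T}) * real (card S') \<le> K * real n"
  shows "(\<Sum>T\<in>L. real (card T) * ln (real (card T))) \<le> K * real n * real (circuit_size G inn)"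
proof -
  define E where "E = cedges G inn"
  define S where "S = rs G inn"
  have finE: "finite E" unfolding E_def by (rule finite_cedges[OF circ])
  have finL: "finite L"
  proof -
    have "L \<subseteq> Pow (img n)" using pL unfolding pattern_set_def by auto
    thus ?thesis by (rule finite_subset) (simp add: img_finite)
  qed
  have "(\<Sum>T\<in>L. real (card T) * ln (real (card T))) \<le>
      (\<Sum>T\<in>L. \<Sum>e\<in>E. if (snd e, out T) \<in> E\<^sup>* then real (card (S (snd e))) else 0)"
    unfolding E_def S_def by (rule sum_mono) (rule per_T[OF circ rc pL])
  also have "\<dots> = (\<Sum>e\<in>E. \<Sum>T\<in>L. if (snd e, out T) \<in> E\<^sup>* then real (card (S (snd e))) else 0)"
    by (rule sum.swap)
  also have "\<dots> \<le> (\<Sum>e\<in>E. K * real n)"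
  proof (rule sum_mono)
    fix e assume e: "e \<in> E"
    then obtain u g where ug: "e = (u, Inr g)" "g \<in> G" unfolding E_def cedges_def by blast
    have Ssub: "S (snd e) \<subseteq> img n" unfolding S_def ug using rs_Inr_sub[OF circ] by simp
    have "(\<Sum>T\<in>L. if (snd e, out T) \<in> E\<^sup>* then real (card (S (snd e))) else 0)
        = (\<Sum>T\<in>{T\<in>L. (snd e, out T) \<in> E\<^sup>*}. real (card (S (snd e))))"
      by (rule sum.inter_filter[OF finL, symmetric])
    also have "\<dots> = real (card {T\<in>L. (snd e, out T) \<in> E\<^sup>*}) * real (card (S (snd e)))" by simp
    also have "\<dots> \<le> real (card {T\<in>L. S (snd e) \<subseteq> T}) * real (card (S (snd e)))"
    proof (rule mult_right_mono)
      have "{T\<in>L. (snd e, out T) \<in> E\<^sup>*} \<subseteq> {T\<in>L. S (snd e) \<subseteq> T}"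
      proof
        fix T assume "T \<in> {T\<in>L. (snd e, out T) \<in> E\<^sup>*}"
        hence T: "T \<in> L" "(snd e, out T) \<in> E\<^sup>*" by auto
        have "S (snd e) \<subseteq> T"
        proof
          fix p assume p: "p \<in> S (snd e)"
          hence pi: "p \<in> img n" using Ssub by blast
          have "(Inl p, snd e) \<in> E\<^sup>*" using p unfolding S_def rs_def E_def by simp
          hence "(Inl p, out T) \<in> E\<^sup>*" using T(2) by (rule rtrancl_trans)
          moreover have "(Inl p, out T) \<in> (cedges G inn)\<^sup>* \<longleftrightarrow> p \<in> T" using rc T(1) pi unfolding RC_def by blast
          ultimately show "p \<in> T" unfolding E_def by simp
        qed
        thus "T \<in> {T\<in>L. S (snd e) \<subseteq> T}" using T by simp
      qed
      hence "card {T\<in>L. (snd e, out T) \<in> E\<^sup>*} \<le> card {T\<in>L. S (snd e) \<subseteq> T}"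
        by (rule card_mono[rotated]) (simp add: finL)
      thus "real (card {T\<in>L. (snd e, out T) \<in> E\<^sup>*}) \<le> real (card {T\<in>L. S (snd e) \<subseteq> T})" by simp
    qed simp
    also have "\<dots> \<le> K * real n" using K[OF Ssub] .
    finally show "(\<Sum>T\<in>L. if (snd e, out T) \<in> E\<^sup>* then real (card (S (snd e))) else 0) \<le> K * real n" .
  qed
  also have "\<dots> = K * real n * real (card E)" by simp
  finally show ?thesis unfolding size_eq[OF circ] E_def .
qed

lemma exists_circ:
  assumes pL: "pattern_set n L"
  shows "\<exists>G inn out. circuit n L G inn out \<and> (\<forall>g\<in>G. card (inn g) \<le> 2)
            \<and> computes_or n L G inn out \<and> computes_sum n L G inn out"
proof -
  have Lsub: "L \<subseteq> Pow (img n)" using pL unfolding pattern_set_def by auto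
  have finL: "finite L" using Lsub by (rule finite_subset) (simp add: img_finite)
  have Tprops: "T \<subseteq> img n" "T \<noteq> {}" "finite T" if "T \<in> L" for T
  proof -
    show "T \<subseteq> img n" "T \<noteq> {}" using pL that unfolding pattern_set_def by auto
    thus "finite T" using img_finite finite_subset by blast
  qed
  define m where "m = card L"
  obtain h where h: "bij_betw h {0..<m} L" using ex_bij_betw_nat_finite[OF finL] unfolding m_def by blast
  define idx where "idx = inv_into {0..<m} h"
  have idx: "idx T < m" "h (idx T) = T" if "T \<in> L" for T
  proof -
    show "h (idx T) = T" unfolding idx_def using h that by (simp add: bij_betw_def f_inv_into_f)
    have "idx T \<in> {0..<m}" unfolding idx_def using h that by (metis bij_betw_def inv_into_into)
    thus "idx T < m" by simp
  qed
  have hL: "h i \<in> L" if "i < m" for i using h that by (auto simp: bij_betw_def)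
  define xs where "xs T = (SOME xs. set xs = T \<and> distinct xs)" for T :: "pixel set"
  have xs: "set (xs T) = T" "distinct (xs T)" if "T \<in> L" for T
  proof -
    have "\<exists>xs. set xs = T \<and> distinct xs" using finite_distinct_list[OF Tprops(3)[OF that]] .
    hence "set (xs T) = T \<and> distinct (xs T)" unfolding xs_def by (rule someI_ex)
    thus "set (xs T) = T" "distinct (xs T)" by auto
  qed
  define len where "len T = length (xs T)" for T
  have lenpos: "0 < len T" if "T \<in> L" for T
    using xs(1)[OF that] Tprops(2)[OF that] unfolding len_def by (cases "xs T") auto
  define G where "G = prod_encode ` (SIGMA i:{..<m}. {..<len (h i)})"
  define inn where "inn g = (case prod_decode g of (i, 0) \<Rightarrow> {Inl (xs (h i) ! 0)}
      | (i, Suc j) \<Rightarrow> {Inr (prod_encode (i, j)), Inl (xs (h i) ! Suc j)})" for g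
  define out :: "pixel set \<Rightarrow> node" where "out T = Inr (prod_encode (idx T, len T - 1))" for T
  have inG: "prod_encode (i, j) \<in> G \<longleftrightarrow> i < m \<and> j < len (h i)" for i j
    unfolding G_def by (auto simp: inj_prod_encode inj_image_mem_iff)
  have Gcases: "\<exists>i j. g = prod_encode (i,j) \<and> i < m \<and> j < len (h i)" if "g \<in> G" for g
    using that unfolding G_def by auto
  have inn0: "inn (prod_encode (i, 0)) = {Inl (xs (h i) ! 0)}" for i unfolding inn_def by simp
  have innS: "inn (prod_encode (i, Suc j)) = {Inr (prod_encode (i, j)), Inl (xs (h i) ! Suc j)}" for i j
    unfolding inn_def by simp
  have xs_in: "xs (h i) ! j \<in> img n" if "i < m" "j < len (h i)" for i j
  proof -
    have "xs (h i) ! j \<in> set (xs (h i))" using that(2) unfolding len_def by simp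
    thus ?thesis using xs(1)[OF hL[OF that(1)]] Tprops(1)[OF hL[OF that(1)]] by blast
  qed
  have circ: "circuit n L G inn out"
    unfolding circuit_def
  proof (intro conjI)
    show "finite G" unfolding G_def by simp
    show "\<forall>g\<in>G. inn g \<noteq> {} \<and> inn g \<subseteq> Inl ` img n \<union> Inr ` G"
    proof
      fix g assume "g \<in> G"
      then obtain i j where g: "g = prod_encode (i,j)" "i < m" "j < len (h i)" using Gcases by blast
      show "inn g \<noteq> {} \<and> inn g \<subseteq> Inl ` img n \<union> Inr ` G"
      proof (cases j)
        case 0 thus ?thesis using g xs_in[OF g(2,3)] inn0 by simp
      next
        case (Suc j')
        have "prod_encode (i, j') \<in> G" using inG g Suc by simp
        thus ?thesis using g xs_in[OF g(2,3)] innS Suc by simp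
      qed
    qed
    show "\<exists>r :: nat \<Rightarrow> nat. \<forall>g\<in>G. \<forall>h'. Inr h' \<in> inn g \<longrightarrow> r h' < r g"
    proof (intro exI[of _ "\<lambda>g. snd (prod_decode g)"] ballI allI impI)
      fix g h' assume gG: "g \<in> G" and hi: "Inr h' \<in> inn g"
      then obtain i j where g: "g = prod_encode (i,j)" using Gcases by blast
      show "snd (prod_decode h') < snd (prod_decode g)"
      proof (cases j)
        case 0 thus ?thesis using hi g inn0 by simp
      next
        case (Suc j') thus ?thesis using hi g innS by auto
      qed
    qed
    show "inj_on out L"
    proof (rule inj_onI)
      fix T T' assume T: "T \<in> L" "T' \<in> L" and "out T = out T'"
      hence "idx T = idx T'" unfolding out_def by simp
      thus "T = T'" using idx(2)[OF T(1)] idx(2)[OF T(2)] by metis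
    qed
    show "out ` L \<subseteq> Inl ` img n \<union> Inr ` G"
    proof
      fix y assume "y \<in> out ` L"
      then obtain T where T: "T \<in> L" "y = out T" by blast
      have "len T - 1 < len (h (idx T))" using idx(2)[OF T(1)] lenpos[OF T(1)] by simp
      hence "prod_encode (idx T, len T - 1) \<in> G" using inG idx(1)[OF T(1)] by simp
      thus "y \<in> Inl ` img n \<union> Inr ` G" unfolding T(2) out_def by simp
    qed
    show "\<forall>T\<in>L. \<forall>g\<in>G. out T \<notin> inn g"
    proof (intro ballI)
      fix T g assume T: "T \<in> L" and "g \<in> G"
      then obtain i j where g: "g = prod_encode (i,j)" "i < m" "j < len (h i)" using Gcases by blast
      show "out T \<notin> inn g"
      proof (cases j)
        case 0 thus ?thesis using g inn0 unfolding out_def by simp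
      next
        case (Suc j')
        show ?thesis
        proof
          assume "out T \<in> inn g"
          hence "i = idx T" "j' = len T - 1" using g Suc innS unfolding out_def by auto
          thus False using g(3) Suc idx(2)[OF T] lenpos[OF T] by simp
        qed
      qed
    qed
  qed
  have fan: "\<forall>g\<in>G. card (inn g) \<le> 2"
  proof
    fix g assume "g \<in> G"
    then obtain i j where g: "g = prod_encode (i,j)" using Gcases by blast
    show "card (inn g) \<le> 2"
    proof (cases j)
      case 0 thus ?thesis using g inn0 by simp
    next
      case (Suc j') thus ?thesis using g innS by (simp add: card_insert_if)
    qed
  qed
  have cor: "computes_or n L G inn out"
    unfolding computes_or_def
  proof (intro allI impI ballI)
    fix x :: "pixel \<Rightarrow> bool" and v :: "node \<Rightarrow> bool" and T
    assume H: "(\<forall>p\<in>img n. v (Inl p) = x p) \<and> (\<forall>g\<in>G. v (Inr g) = (\<exists>u\<in>inn g. v u))" and T: "T \<in> L"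
    have vl: "v (Inl p) = x p" if "p \<in> img n" for p using H that by blast
    have vg: "v (Inr g) = (\<exists>u\<in>inn g. v u)" if "g \<in> G" for g using H that by blast
    define i where "i = idx T"
    have i: "i < m" "h i = T" unfolding i_def using idx[OF T] by auto
    have claim: "j < len T \<Longrightarrow> v (Inr (prod_encode (i, j))) = (\<exists>q\<in>set (take (Suc j) (xs T)). x q)" for j
    proof (induction j)
      case 0
      have gG: "prod_encode (i, 0) \<in> G" using inG i 0 by simp
      have "take (Suc 0) (xs T) = [xs T ! 0]" using 0 unfolding len_def by (cases "xs T") auto
      thus ?case using vg[OF gG] inn0 vl xs_in[of i 0] i 0 by simp
    next
      case (Suc j)
      have gG: "prod_encode (i, Suc j) \<in> G" using inG i Suc.prems by simp
      have tk: "take (Suc (Suc j)) (xs T) = take (Suc j) (xs T) @ [xs T ! Suc j]"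
        using Suc.prems unfolding len_def by (simp add: take_Suc_conv_app_nth)
      have "v (Inr (prod_encode (i, Suc j))) = (v (Inr (prod_encode (i, j))) \<or> x (xs T ! Suc j))"
        using vg[OF gG] innS vl xs_in[of i "Suc j"] i Suc.prems by simp
      thus ?case using Suc.IH Suc.prems tk by auto
    qed
    have "len T - 1 < len T" using lenpos[OF T] by simp
    from claim[OF this] have "v (out T) = (\<exists>q\<in>set (take (len T) (xs T)). x q)"
      unfolding out_def i_def using lenpos[OF T] by simp
    also have "\<dots> = (\<exists>q\<in>T. x q)" unfolding len_def using xs[OF T] by simp
    finally show "v (out T) = (\<exists>p\<in>T. x p)" .
  qed
  have csum: "computes_sum n L G inn out"
    unfolding computes_sum_def
  proof (intro allI impI ballI)
    fix x :: "pixel \<Rightarrow> nat" and v :: "node \<Rightarrow> nat" and T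
    assume H: "(\<forall>p\<in>img n. v (Inl p) = x p) \<and> (\<forall>g\<in>G. v (Inr g) = (\<Sum>u\<in>inn g. v u))" and T: "T \<in> L"
    have vl: "v (Inl p) = x p" if "p \<in> img n" for p using H that by blast
    have vg: "v (Inr g) = (\<Sum>u\<in>inn g. v u)" if "g \<in> G" for g using H that by blast
    define i where "i = idx T"
    have i: "i < m" "h i = T" unfolding i_def using idx[OF T] by auto
    have dT: "distinct (xs T)" using xs[OF T] by simp
    have claim: "j < len T \<Longrightarrow> v (Inr (prod_encode (i, j))) = (\<Sum>q\<in>set (take (Suc j) (xs T)). x q)" for j
    proof (induction j)
      case 0
      have gG: "prod_encode (i, 0) \<in> G" using inG i 0 by simp
      have "take (Suc 0) (xs T) = [xs T ! 0]" using 0 unfolding len_def by (cases "xs T") auto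
      thus ?case using vg[OF gG] inn0 vl xs_in[of i 0] i 0 by simp
    next
      case (Suc j)
      have gG: "prod_encode (i, Suc j) \<in> G" using inG i Suc.prems by simp
      have tk: "take (Suc (Suc j)) (xs T) = take (Suc j) (xs T) @ [xs T ! Suc j]"
        using Suc.prems unfolding len_def by (simp add: take_Suc_conv_app_nth)
      have "distinct (take (Suc (Suc j)) (xs T))" using dT by simp
      hence nin: "xs T ! Suc j \<notin> set (take (Suc j) (xs T))" unfolding tk by simp
      have "v (Inr (prod_encode (i, Suc j))) = v (Inr (prod_encode (i, j))) + x (xs T ! Suc j)"
        using vg[OF gG] innS vl xs_in[of i "Suc j"] i Suc.prems by simp
      thus ?case using Suc.IH Suc.prems tk nin by simp
    qed
    have "len T - 1 < len T" using lenpos[OF T] by simp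
    from claim[OF this] have "v (out T) = (\<Sum>q\<in>set (take (len T) (xs T)). x q)"
      unfolding out_def i_def using lenpos[OF T] by simp
    also have "\<dots> = (\<Sum>q\<in>T. x q)" unfolding len_def using xs[OF T] by simp
    finally show "v (out T) = (\<Sum>p\<in>T. x p)" .
  qed
  show ?thesis using circ fan cor csum by blast
qed

lemma finish_aux:
  fixes B K :: real and sz c :: nat
  assumes "B \<le> K * real n * real sz" "sz \<le> 2 * c" "0 \<le> K"
  shows "B \<le> (2*K+1) * real n * real c"
proof -
  have "K * real n * real sz \<le> K * real n * (2 * real c)"
    using assms(2,3) by (intro mult_left_mono) auto
  also have "\<dots> \<le> (2*K+1) * real n * real c" by (simp add: algebra_simps)
  finally show ?thesis using assms(1) by linarith
qed

lemma cost_bounds: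
  fixes C :: real
  assumes sps: "strip_pattern_set n C Q L" and C: "C > 0" and n2: "n \<ge> 2"
  defines "K \<equiv> real Q * (8*C+1) * (2*C+1)"
  defines "B \<equiv> (\<Sum>T\<in>L. real (card T) * ln (real (card T)))"
  shows "B \<le> (2*K+1) * real n * real (OR_cost n L)"
    "B \<le> (2*K+1) * real n * real (SUM_cost n L)"
    "B \<le> (2*K+1) * real n * real (OR2_cost n L)"
    "B \<le> (2*K+1) * real n * real (SUM2_cost n L)"
proof -
  have pL: "pattern_set n L" using sps unfolding strip_pattern_set_def by (rule conjunct1)
  have K0: "0 \<le> K" unfolding K_def using C by simp
  have Kg: "\<And>S'. S' \<subseteq> img n \<Longrightarrow> real (card {T\<in>L. S' \<subseteq> T}) * real (card S') \<le> K * real n"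
    unfolding K_def by (rule geo[OF sps C n2])
  obtain G0 inn0 out0 where c0: "circuit n L G0 inn0 out0" "\<forall>g\<in>G0. card (inn0 g) \<le> 2"
    "computes_or n L G0 inn0 out0" "computes_sum n L G0 inn0 out0"
    using exists_circ[OF pL] by blast
  have sz2: "circuit_size G inn \<le> 2 * card G" if "\<forall>g\<in>G. card (inn g) \<le> 2" for G inn
  proof -
    have "circuit_size G inn \<le> (\<Sum>g\<in>G. 2)" unfolding circuit_size_def using that by (intro sum_mono) auto
    thus ?thesis by simp
  qed
  show "B \<le> (2*K+1) * real n * real (OR_cost n L)"
  proof -
    let ?P = "\<lambda>s. \<exists>G inn out. circuit n L G inn out \<and> computes_or n L G inn out \<and> circuit_size G inn = s"
    have "?P (circuit_size G0 inn0)" using c0 by blast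
    hence "?P (LEAST s. ?P s)" by (rule LeastI)
    then obtain G inn out where H: "circuit n L G inn out" "computes_or n L G inn out"
      "circuit_size G inn = OR_cost n L" unfolding OR_cost_def by blast
    have "B \<le> K * real n * real (circuit_size G inn)"
      unfolding B_def by (rule total[OF H(1) or_RC[OF H(1,2)] pL Kg])
    thus ?thesis using finish_aux[OF _ _ K0, of B n "circuit_size G inn" "OR_cost n L"] H(3) by simp
  qed
  show "B \<le> (2*K+1) * real n * real (SUM_cost n L)"
  proof -
    let ?P = "\<lambda>s. \<exists>G inn out. circuit n L G inn out \<and> computes_sum n L G inn out \<and> circuit_size G inn = s"
    have "?P (circuit_size G0 inn0)" using c0 by blast
    hence "?P (LEAST s. ?P s)" by (rule LeastI)
    then obtain G inn out where H: "circuit n L G inn out" "computes_sum n L G inn out"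
      "circuit_size G inn = SUM_cost n L" unfolding SUM_cost_def by blast
    have "B \<le> K * real n * real (circuit_size G inn)"
      unfolding B_def by (rule total[OF H(1) sum_RC[OF H(1,2) pL] pL Kg])
    thus ?thesis using finish_aux[OF _ _ K0, of B n "circuit_size G inn" "SUM_cost n L"] H(3) by simp
  qed
  show "B \<le> (2*K+1) * real n * real (OR2_cost n L)"
  proof -
    let ?P = "\<lambda>s. \<exists>G inn out. circuit n L G inn out \<and> (\<forall>g\<in>G. card (inn g) \<le> 2) \<and> computes_or n L G inn out \<and> card G = s"
    have "?P (card G0)" using c0 by blast
    hence "?P (LEAST s. ?P s)" by (rule LeastI)
    then obtain G inn out where H: "circuit n L G inn out" "\<forall>g\<in>G. card (inn g) \<le> 2" "computes_or n L G inn out"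
      "card G = OR2_cost n L" unfolding OR2_cost_def by blast
    have "B \<le> K * real n * real (circuit_size G inn)"
      unfolding B_def by (rule total[OF H(1) or_RC[OF H(1,3)] pL Kg])
    moreover have "circuit_size G inn \<le> 2 * OR2_cost n L" using sz2[OF H(2)] H(4) by simp
    ultimately show ?thesis using finish_aux[OF _ _ K0] by blast
  qed
  show "B \<le> (2*K+1) * real n * real (SUM2_cost n L)"
  proof -
    let ?P = "\<lambda>s. \<exists>G inn out. circuit n L G inn out \<and> (\<forall>g\<in>G. card (inn g) \<le> 2) \<and> computes_sum n L G inn out \<and> card G = s"
    have "?P (card G0)" using c0 by blast
    hence "?P (LEAST s. ?P s)" by (rule LeastI)
    then obtain G inn out where H: "circuit n L G inn out" "\<forall>g\<in>G. card (inn g) \<le> 2" "computes_sum n L G inn out"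
      "card G = SUM2_cost n L" unfolding SUM2_cost_def by blast
    have "B \<le> K * real n * real (circuit_size G inn)"
      unfolding B_def by (rule total[OF H(1) sum_RC[OF H(1,3) pL] pL Kg])
    moreover have "circuit_size G inn \<le> 2 * SUM2_cost n L" using sz2[OF H(2)] H(4) by simp
    ultimately show ?thesis using finish_aux[OF _ _ K0] by blast
  qed
qed

lemma tlnt:
  fixes t :: nat and n :: nat
  assumes "1 \<le> t" "1 \<le> n"
  shows "real t * ln (real n) - real n \<le> real t * ln (real t)"
proof -
  have tp: "0 < real t" and np: "0 < real n" using assms by auto
  have "ln (real n / real t) \<le> real n / real t - 1" using tp np by (intro ln_le_minus_one) simp
  hence "ln (real n) - ln (real t) \<le> real n / real t - 1" using tp np by (simp add: ln_divide_pos)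
  hence "real t * (ln (real n) - ln (real t)) \<le> real t * (real n / real t - 1)"
    using tp by (intro mult_left_mono) auto
  hence "real t * ln (real n) - real t * ln (real t) \<le> real n - real t" using tp by (simp add: algebra_simps)
  thus ?thesis using tp by linarith
qed

lemma B_lower:
  assumes pL: "pattern_set n L" and n: "1 \<le> n"
  shows "real (volume L) * ln (real n) - real (card L) * real n \<le> (\<Sum>T\<in>L. real (card T) * ln (real (card T)))"
proof -
  have Lsub: "L \<subseteq> Pow (img n)" using pL unfolding pattern_set_def by auto
  have finL: "finite L" using Lsub by (rule finite_subset) (simp add: img_finite)
  have ct: "1 \<le> card T" if "T \<in> L" for T
  proof -
    have "T \<subseteq> img n" "T \<noteq> {}" using pL that unfolding pattern_set_def by auto
    moreover have "finite T" using \<open>T \<subseteq> img n\<close> img_finite by (rule finite_subset)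
    ultimately show ?thesis by (simp add: Suc_le_eq card_gt_0_iff)
  qed
  have "real (volume L) * ln (real n) - real (card L) * real n = (\<Sum>T\<in>L. real (card T) * ln (real n) - real n)"
    unfolding volume_def by (simp add: sum_subtractf sum_distrib_right)
  also have "\<dots> \<le> (\<Sum>T\<in>L. real (card T) * ln (real (card T)))"
    by (rule sum_mono) (rule tlnt[OF ct n])
  finally show ?thesis .
qed

lemma asym:
  fixes B :: "nat \<Rightarrow> real" and f V m :: "nat \<Rightarrow> nat" and K2 c1 c2 :: real
  assumes fB: "\<forall>n\<ge>2. B n \<le> K2 * real n * real (f n)" and K2: "K2 > 0"
    and BL: "\<forall>n\<ge>2. real (V n) * ln (real n) - real (m n) * real n \<le> B n"
    and c1: "c1 > 0" "eventually (\<lambda>n. real (m n) \<le> c1 * real n ^ 2) at_top"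
    and c2: "c2 > 0" "eventually (\<lambda>n. c2 * real n ^ 3 \<le> real (V n)) at_top"
  shows "(\<lambda>n. real (f n)) \<in> \<Omega>(\<lambda>n. real n ^ 2 * ln (real n))"
proof -
  obtain N0 :: nat where N0: "exp (2*c1/c2) \<le> real N0" using real_arch_simple by blast
  have ev: "eventually (\<lambda>n. n \<ge> max 2 N0) at_top" by (rule eventually_ge_at_top)
  have "eventually (\<lambda>n. norm (real (f n)) \<ge> c2/(2*K2) * norm (real n ^ 2 * ln (real n))) at_top"
    using ev c1(2) c2(2)
  proof eventually_elim
    case (elim n)
    have n2: "n \<ge> 2" and nN: "n \<ge> N0" using elim(1) by auto
    have np: "0 < real n" using n2 by simp
    have "exp (2*c1/c2) \<le> real n" using N0 nN by linarith
    hence "ln (exp (2*c1/c2)) \<le> ln (real n)" using np by (subst ln_le_cancel_iff) auto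
    hence lnb: "2*c1/c2 \<le> ln (real n)" by simp
    have lnp: "0 \<le> ln (real n)" using n2 by simp
    have "c2 * real n ^ 3 * ln (real n) \<le> real (V n) * ln (real n)"
      using elim(3) lnp by (rule mult_right_mono)
    moreover have "real (m n) * real n \<le> c1 * real n ^ 2 * real n"
      using elim(2) np by (intro mult_right_mono) auto
    moreover have "2*c1 \<le> c2 * ln (real n)" using lnb c2(1) by (simp add: pos_divide_le_eq mult.commute)
    hence "c1 * real n ^ 3 \<le> (c2/2) * ln (real n) * real n ^ 3" using np by (intro mult_right_mono) auto
    moreover have "c1 * real n ^ 2 * real n = c1 * real n ^ 3" by (simp add: power3_eq_cube power2_eq_square)
    moreover have "c2 * real n ^ 3 * ln (real n) - (c2/2) * ln (real n) * real n ^ 3 = (c2/2) * real n ^ 3 * ln (real n)"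
      by (simp add: algebra_simps)
    ultimately have "(c2/2) * real n ^ 3 * ln (real n) \<le> real (V n) * ln (real n) - real (m n) * real n"
      by linarith
    also have "\<dots> \<le> B n" using BL n2 by blast
    also have "\<dots> \<le> K2 * real n * real (f n)" using fB n2 by blast
    finally have X: "(c2/2) * real n ^ 3 * ln (real n) \<le> K2 * real n * real (f n)" .
    have e1: "(c2/2) * real n ^ 3 * ln (real n) = real n * ((c2/2) * real n ^ 2 * ln (real n))"
      by (simp add: power3_eq_cube power2_eq_square)
    have e2: "K2 * real n * real (f n) = real n * (K2 * real (f n))" by simp
    have "real n * ((c2/2) * real n ^ 2 * ln (real n)) \<le> real n * (K2 * real (f n))" using X unfolding e1 e2 .
    hence Y: "(c2/2) * real n ^ 2 * ln (real n) \<le> K2 * real (f n)" using np by simp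
    have "c2/(2*K2) * norm (real n ^ 2 * ln (real n)) = ((c2/2) * real n ^ 2 * ln (real n)) / K2"
      using lnp by (simp add: abs_mult)
    also have "\<dots> \<le> real (f n)" using Y K2 by (simp add: divide_le_eq algebra_simps)
    finally show ?case by simp
  qed
  moreover have "c2/(2*K2) > 0" using c2(1) K2 by simp
  ultimately show ?thesis unfolding bigomega_def by blast
qed

theorem theorem4:
  fixes C :: real and Q :: nat and \<L> :: "nat \<Rightarrow> pixel set set"
  assumes "C > 0"
    and "\<forall>n\<ge>1. strip_pattern_set n C Q (\<L> n)"
    and "(\<lambda>n. real (card (\<L> n))) \<in> \<Theta>(\<lambda>n. real n ^ 2)"
    and "(\<lambda>n. real (volume (\<L> n))) \<in> \<Omega>(\<lambda>n. real n ^ 3)"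
  shows "(\<lambda>n. real (OR_cost n (\<L> n))) \<in> \<Omega>(\<lambda>n. real n ^ 2 * ln (real n))
       \<and> (\<lambda>n. real (SUM_cost n (\<L> n))) \<in> \<Omega>(\<lambda>n. real n ^ 2 * ln (real n))
       \<and> (\<lambda>n. real (OR2_cost n (\<L> n))) \<in> \<Omega>(\<lambda>n. real n ^ 2 * ln (real n))
       \<and> (\<lambda>n. real (SUM2_cost n (\<L> n))) \<in> \<Omega>(\<lambda>n. real n ^ 2 * ln (real n))"
proof -
  have "(\<lambda>n. real (card (\<L> n))) \<in> O(\<lambda>n. real n ^ 2)" using assms(3) unfolding bigtheta_def by blast
  then obtain c1 where c1: "c1 > 0" "eventually (\<lambda>n. norm (real (card (\<L> n))) \<le> c1 * norm (real n ^ 2)) at_top"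
    unfolding bigo_def by blast
  have c1': "eventually (\<lambda>n. real (card (\<L> n)) \<le> c1 * real n ^ 2) at_top"
    using c1(2) by (rule eventually_mono) simp
  obtain c2 where c2: "c2 > 0" "eventually (\<lambda>n. norm (real (volume (\<L> n))) \<ge> c2 * norm (real n ^ 3)) at_top"
    using assms(4) unfolding bigomega_def by blast
  have c2': "eventually (\<lambda>n. c2 * real n ^ 3 \<le> real (volume (\<L> n))) at_top"
    using c2(2) by (rule eventually_mono) simp
  define K where "K = real Q * (8*C+1) * (2*C+1)"
  define K2 where "K2 = 2*K+1"
  have "0 \<le> K" unfolding K_def using assms(1) by simp
  hence K2: "K2 > 0" unfolding K2_def by simp
  define B where "B n = (\<Sum>T\<in>\<L> n. real (card T) * ln (real (card T)))" for n
  have sps: "strip_pattern_set n C Q (\<L> n)" if "n \<ge> 2" for n using assms(2) that by simp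
  have BL: "\<forall>n\<ge>2. real (volume (\<L> n)) * ln (real n) - real (card (\<L> n)) * real n \<le> B n"
  proof (intro allI impI)
    fix n :: nat assume n: "n \<ge> 2"
    have "pattern_set n (\<L> n)" using sps[OF n] unfolding strip_pattern_set_def by (rule conjunct1)
    thus "real (volume (\<L> n)) * ln (real n) - real (card (\<L> n)) * real n \<le> B n"
      unfolding B_def by (rule B_lower) (use n in simp)
  qed
  note cb = cost_bounds[OF sps assms(1)]
  have f1: "\<forall>n\<ge>2. B n \<le> K2 * real n * real (OR_cost n (\<L> n))"
    unfolding B_def K2_def K_def using cb(1) by blast
  have f2: "\<forall>n\<ge>2. B n \<le> K2 * real n * real (SUM_cost n (\<L> n))"
    unfolding B_def K2_def K_def using cb(2) by blast
  have f3: "\<forall>n\<ge>2. B n \<le> K2 * real n * real (OR2_cost n (\<L> n))"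
    unfolding B_def K2_def K_def using cb(3) by blast
  have f4: "\<forall>n\<ge>2. B n \<le> K2 * real n * real (SUM2_cost n (\<L> n))"
    unfolding B_def K2_def K_def using cb(4) by blast
  show ?thesis
    using asym[OF f1 K2 BL c1(1) c1' c2(1) c2'] asym[OF f2 K2 BL c1(1) c1' c2(1) c2']
      asym[OF f3 K2 BL c1(1) c1' c2(1) c2'] asym[OF f4 K2 BL c1(1) c1' c2(1) c2'] by blast
qed

end
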